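(* Let $(\Omega,F,\mathbf P)$ be a non-trivial probability space and let $\psi\colon[1,\infty)\to(0,\infty)$ be a finite, continuous, strictly increasing function with $\psi(1)=\inf_{p\ge1}\psi(p)=1$. Let $q=(q(1),q(2),\dots)$ be a strictly increasing sequence of real numbers with $q(1)=1$ and $\lim_{m\to\infty}q(m)=\infty$, and put $$W[q,\psi]=\sup_{m=1,2,\dots}\frac{\psi(q(m+1))}{\psi(q(m))}.$$ Suppose $W[q,\psi]<\infty$. Then for every measurable $f\colon\Omega\to\mathbb R$, $$\|f\|G^q\psi\le\|f\|G\psi\le W[q,\psi]\,\|f\|G^q\psi,$$ where $$\|f\|G\psi=\sup_{p\ge1}\frac{|f|_p}{\psi(p)},\qquad \|f\|G^q\psi=\sup_{m=1,2,\dots}\frac{|f|_{q(m)}}{\psi(q(m))}.$$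
   Context: For a random variable $f$ on $(\Omega,F,\mathbf P)$, $|f|_p=\left(\mathbf E|f|^p\right)^{1/p}$ for $1\le p<\infty$ (possibly $+\infty$). The quantity $\|f\|G\psi$ is the Grand Lebesgue Space norm with generating function $\psi$, and $\|f\|G^q\psi$ is the discrete Grand Lebesgue Space norm. *)

theory Defs
  imports "HOL-Probability.Probability"
begin

definition Lp_norm :: "'a measure \<Rightarrow> ('a \<Rightarrow> real) \<Rightarrow> real \<Rightarrow> ennreal" where
  "Lp_norm M f p =
     (let I = (\<integral>\<^sup>+ x. ennreal (\<bar>f x\<bar> powr p) \<partial>M)
      in if I = \<infinity> then \<infinity> else ennreal (enn2real I powr (1 / p)))"

definition GLS_norm :: "'a measure \<Rightarrow> (real \<Rightarrow> real) \<Rightarrow> ('a \<Rightarrow> real) \<Rightarrow> ennreal" where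
  "GLS_norm M \<psi> f = (SUP p\<in>{1..}. Lp_norm M f p / ennreal (\<psi> p))"

definition GLS_disc_norm :: "'a measure \<Rightarrow> (nat \<Rightarrow> real) \<Rightarrow> (real \<Rightarrow> real) \<Rightarrow> ('a \<Rightarrow> real) \<Rightarrow> ennreal" where
  "GLS_disc_norm M q \<psi> f = (SUP m\<in>{1..}. Lp_norm M f (q m) / ennreal (\<psi> (q m)))"

definition W_const :: "(nat \<Rightarrow> real) \<Rightarrow> (real \<Rightarrow> real) \<Rightarrow> ennreal" where
  "W_const q \<psi> = (SUP m\<in>{1..}. ennreal (\<psi> (q (Suc m)) / \<psi> (q m)))"

end

theory Submission
  imports Defs
begin

lemma pow_le_self: fixes t s :: real assumes "0 \<le> t" "t \<le> 1" "1 \<le> s" shows "t powr s \<le> t"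
proof -
  have "t powr s \<le> t powr 1" by (rule powr_mono') (use assms in auto)
  thus ?thesis using assms by (cases "t = 0") auto
qed

lemma convex_maxpow: fixes s :: real assumes "s \<ge> 1"
  shows "convex_on UNIV (\<lambda>y. (max y 0) powr s)"
proof (rule convex_onI)
  fix t x y :: real assume t: "0 < t" "t < 1"
  define a where "a = max x 0"
  define b where "b = max y 0"
  have ab: "a \<ge> 0" "b \<ge> 0" by (auto simp: a_def b_def)
  have "max ((1 - t) *\<^sub>R x + t *\<^sub>R y) 0 \<le> (1-t)*a + t*b"
    using t by (auto simp: a_def b_def intro!: add_mono mult_left_mono)
  hence "(max ((1 - t) *\<^sub>R x + t *\<^sub>R y) 0) powr s \<le> ((1-t)*a + t*b) powr s"
    using assms by (intro powr_mono2) auto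
  also have "((1-t)*a + t*b) powr s \<le> (1-t) * a powr s + t * b powr s"
  proof (cases "a = 0 \<or> b = 0")
    case True
    then show ?thesis
    proof
      assume a0: "a = 0"
      have "(t*b) powr s = t powr s * b powr s" using t ab by (simp add: powr_mult)
      also have "\<dots> \<le> t * b powr s" using pow_le_self[of t s] t assms by (intro mult_right_mono) auto
      finally show ?thesis using a0 assms by simp
    next
      assume b0: "b = 0"
      have "((1-t)*a) powr s = (1-t) powr s * a powr s" using t ab by (simp add: powr_mult)
      also have "\<dots> \<le> (1-t) * a powr s" using pow_le_self[of "1-t" s] t assms by (intro mult_right_mono) auto
      finally show ?thesis using b0 assms by simp
    qed
  next
    case False
    then have "a > 0" "b > 0" using ab by auto
    then show ?thesis using convex_onD[OF powr_convex[OF assms], of t a b] t by auto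
  qed
  finally show "(max ((1 - t) *\<^sub>R x + t *\<^sub>R y) 0) powr s \<le> (1 - t) * (max x 0) powr s + t * (max y 0) powr s"
    by (simp add: a_def b_def)
qed simp

lemma lyap:
  assumes P: "prob_space M" and fm: "f \<in> borel_measurable M" and p: "1 \<le> p" "p \<le> r"
  shows "Lp_norm M f p \<le> Lp_norm M f r"
proof -
  interpret prob_space M by fact
  define Ir where "Ir = (\<integral>\<^sup>+ x. ennreal (\<bar>f x\<bar> powr r) \<partial>M)"
  define Ip where "Ip = (\<integral>\<^sup>+ x. ennreal (\<bar>f x\<bar> powr p) \<partial>M)"
  show ?thesis
  proof (cases "Ir = \<infinity>")
    case True
    then show ?thesis by (simp add: Lp_norm_def Ir_def[symmetric] Let_def)
  next
    case False
    have mr: "(\<lambda>x. \<bar>f x\<bar> powr r) \<in> borel_measurable M" using fm by measurable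
    have mp: "(\<lambda>x. \<bar>f x\<bar> powr p) \<in> borel_measurable M" using fm by measurable
    have intr: "integrable M (\<lambda>x. \<bar>f x\<bar> powr r)"
      using False mr by (intro integrableI_nonneg) (auto simp: Ir_def top.not_eq_extremum)
    have bnd: "\<bar>\<bar>f x\<bar> powr p\<bar> \<le> 1 + \<bar>f x\<bar> powr r" for x
    proof (cases "\<bar>f x\<bar> \<le> 1")
      case True
      have "\<bar>f x\<bar> powr p \<le> 1 powr p" by (rule powr_mono2) (use p True in auto)
      then show ?thesis using powr_ge_zero[of "\<bar>f x\<bar>" r] by (smt (verit) powr_one_eq_one abs_of_nonneg powr_ge_zero)
    next
      case False
      have "\<bar>f x\<bar> powr p \<le> \<bar>f x\<bar> powr r" by (rule powr_mono) (use p False in auto)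
      then show ?thesis by simp
    qed
    have intp: "integrable M (\<lambda>x. \<bar>f x\<bar> powr p)"
      by (rule Bochner_Integration.integrable_bound[OF Bochner_Integration.integrable_add[OF integrable_const[of 1] intr]])
         (use mp bnd in auto)
    have Ip_eq: "Ip = ennreal (expectation (\<lambda>x. \<bar>f x\<bar> powr p))"
      unfolding Ip_def by (rule nn_integral_eq_integral[OF intp]) auto
    have Ir_eq: "Ir = ennreal (expectation (\<lambda>x. \<bar>f x\<bar> powr r))"
      unfolding Ir_def by (rule nn_integral_eq_integral[OF intr]) auto
    define s where "s = r / p"
    have s1: "s \<ge> 1" using p by (simp add: s_def)
    define EPx where "EPx = expectation (\<lambda>x. \<bar>f x\<bar> powr p)"
    define ER where "ER = expectation (\<lambda>x. \<bar>f x\<bar> powr r)"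
    have EPx0: "EPx \<ge> 0" unfolding EPx_def by (rule integral_nonneg_AE) auto
    have ER0: "ER \<ge> 0" unfolding ER_def by (rule integral_nonneg_AE) auto
    have comp: "(max (\<bar>f x\<bar> powr p) 0) powr s = \<bar>f x\<bar> powr r" for x
      using p by (simp add: powr_powr s_def)
    have "(max EPx 0) powr s \<le> expectation (\<lambda>x. (max (\<bar>f x\<bar> powr p) 0) powr s)"
      unfolding EPx_def
      by (rule jensens_inequality[where I=UNIV]) (use intp intr convex_maxpow[OF s1] comp in auto)
    hence J: "EPx powr s \<le> ER" using EPx0 comp by (simp add: ER_def)
    have "EPx powr (1/p) = (EPx powr s) powr (1/r)" using p by (simp add: powr_powr s_def)
    also have "\<dots> \<le> ER powr (1/r)" by (rule powr_mono2) (use p J EPx0 in auto)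
    finally have "EPx powr (1/p) \<le> ER powr (1/r)" .
    then show ?thesis using False
      by (simp add: Lp_norm_def Ir_def[symmetric] Ip_def[symmetric] Let_def Ip_eq Ir_eq EPx_def[symmetric] ER_def[symmetric] EPx0 ER0)
  qed
qed

lemma div_ennreal_eq: "0 < c \<Longrightarrow> a / ennreal c = a * ennreal (1 / c)"
  by (simp add: divide_ennreal_def inverse_ennreal inverse_eq_divide)

theorem theorem2p1:
  fixes M :: "'a measure" and \<psi> :: "real \<Rightarrow> real" and q :: "nat \<Rightarrow> real"
    and f :: "'a \<Rightarrow> real"
  assumes "prob_space M"
    and nontrivial: "\<exists>A\<in>sets M. 0 < measure M A \<and> measure M A < 1"
    and psi_pos: "\<And>p. p \<ge> 1 \<Longrightarrow> \<psi> p > 0"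
    and psi_cont: "continuous_on {1..} \<psi>"
    and psi_mono: "strict_mono_on {1..} \<psi>"
    and psi_1: "\<psi> 1 = 1" and psi_inf: "(INF p\<in>{1..}. \<psi> p) = 1"
    and q_mono: "strict_mono_on {1..} q"
    and q_1: "q 1 = 1"
    and q_lim: "filterlim q at_top sequentially"
    and W_fin: "W_const q \<psi> < \<infinity>"
    and f_meas: "f \<in> borel_measurable M"
  shows "GLS_disc_norm M q \<psi> f \<le> GLS_norm M \<psi> f
       \<and> GLS_norm M \<psi> f \<le> W_const q \<psi> * GLS_disc_norm M q \<psi> f"
proof
  have qmono: "q m \<le> q n" if "1 \<le> m" "m \<le> n" for m n
  proof (cases "m = n")
    case False
    then have "q m < q n" using q_mono that unfolding strict_mono_on_def by auto
    then show ?thesis by simp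
  qed simp
  have q1: "q m \<ge> 1" if "m \<ge> 1" for m using qmono[of 1 m] that q_1 by simp
  have psimono: "\<psi> x \<le> \<psi> y" if "1 \<le> x" "x \<le> y" for x y
  proof (cases "x = y")
    case False
    then have "\<psi> x < \<psi> y" using psi_mono that unfolding strict_mono_on_def by auto
    then show ?thesis by simp
  qed simp
  show "GLS_disc_norm M q \<psi> f \<le> GLS_norm M \<psi> f"
    unfolding GLS_disc_norm_def GLS_norm_def
  proof (rule SUP_least)
    fix m :: nat assume "m \<in> {1..}"
    then have "q m \<in> {1..}" using q1 by auto
    then show "Lp_norm M f (q m) / ennreal (\<psi> (q m)) \<le> (SUP p\<in>{1..}. Lp_norm M f p / ennreal (\<psi> p))"
      by (rule SUP_upper)
  qed
  show "GLS_norm M \<psi> f \<le> W_const q \<psi> * GLS_disc_norm M q \<psi> f"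
    unfolding GLS_norm_def
  proof (rule SUP_least)
    fix p :: real assume "p \<in> {1..}"
    hence p1: "p \<ge> 1" by simp
    define S where "S = {m. 1 \<le> m \<and> q m \<le> p}"
    from q_lim have "eventually (\<lambda>n. q n > p) sequentially"
      by (simp add: filterlim_at_top_dense)
    then obtain N where N: "\<And>n. n \<ge> N \<Longrightarrow> q n > p" by (auto simp: eventually_sequentially)
    have "S \<subseteq> {..N}"
    proof
      fix n assume "n \<in> S"
      hence "\<not> q n > p" by (simp add: S_def)
      hence "\<not> n \<ge> N" using N by blast
      thus "n \<in> {..N}" by simp
    qed
    hence finS: "finite S" by (rule finite_subset) simp
    have "1 \<in> S" using q_1 p1 by (simp add: S_def)
    define m where "m = Max S"
    have mS: "m \<in> S" using finS \<open>1 \<in> S\<close> m_def by (metis Max_in empty_iff)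
    have "Suc m \<notin> S" using finS m_def by (metis Max_ge Suc_n_not_le_n)
    hence qSm: "q (Suc m) > p" using mS by (auto simp: S_def)
    have m1: "m \<ge> 1" and qmp: "q m \<le> p" using mS by (auto simp: S_def)
    have qm1: "q m \<ge> 1" using q1 m1 by simp
    have pos_m: "\<psi> (q m) > 0" using psi_pos qm1 by simp
    have pos_Sm: "\<psi> (q (Suc m)) > 0" using psi_pos q1[of "Suc m"] by simp
    have pos_p: "\<psi> p > 0" using psi_pos p1 by simp
    have L: "Lp_norm M f p \<le> Lp_norm M f (q (Suc m))"
      using lyap[OF assms(1) f_meas p1] qSm by simp
    have "Lp_norm M f p / ennreal (\<psi> p) = Lp_norm M f p * ennreal (1 / \<psi> p)"
      using pos_p by (rule div_ennreal_eq)
    also have "\<dots> \<le> Lp_norm M f (q (Suc m)) * ennreal (1 / \<psi> (q m))"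
    proof (rule mult_mono)
      show "ennreal (1 / \<psi> p) \<le> ennreal (1 / \<psi> (q m))"
        using psimono[OF qm1 qmp] pos_m by (intro ennreal_leI) (simp add: frac_le)
    qed (use L in auto)
    also have "\<dots> = (Lp_norm M f (q (Suc m)) * ennreal (1 / \<psi> (q (Suc m)))) * ennreal (\<psi> (q (Suc m)) / \<psi> (q m))"
    proof -
      have "ennreal (1 / \<psi> (q (Suc m))) * ennreal (\<psi> (q (Suc m)) / \<psi> (q m)) = ennreal (1 / \<psi> (q m))"
        using pos_m pos_Sm by (simp add: ennreal_mult[symmetric])
      thus ?thesis by (simp add: mult.assoc)
    qed
    also have "\<dots> = (Lp_norm M f (q (Suc m)) / ennreal (\<psi> (q (Suc m)))) * ennreal (\<psi> (q (Suc m)) / \<psi> (q m))"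
      using pos_Sm by (simp add: div_ennreal_eq)
    also have "\<dots> \<le> GLS_disc_norm M q \<psi> f * W_const q \<psi>"
    proof (rule mult_mono)
      show "Lp_norm M f (q (Suc m)) / ennreal (\<psi> (q (Suc m))) \<le> GLS_disc_norm M q \<psi> f"
        unfolding GLS_disc_norm_def by (rule SUP_upper) simp
      show "ennreal (\<psi> (q (Suc m)) / \<psi> (q m)) \<le> W_const q \<psi>"
        unfolding W_const_def using m1 by (intro SUP_upper) simp
    qed auto
    finally show "Lp_norm M f p / ennreal (\<psi> p) \<le> W_const q \<psi> * GLS_disc_norm M q \<psi> f"
      by (simp add: mult.commute)
  qed
qed
end
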